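(* Let $0<\epsilon\le 1/2$, let $r=\lceil 2^{22}/\epsilon^2\rceil$ and $\gamma=2r+1$, and let $\delta\ge 0$. Consider a population of agents holding opinions in $\{0,1\}$, in which the fraction of agents holding the correct opinion $\mathcal{B}$ is at least $1/2+\delta$. Take $\gamma$ independent noisy samples, each obtained by choosing an agent uniformly at random from the population and reading its opinion through a channel that flips the bit independently with probability at most $1/2-\epsilon$. Then the probability that the majority of the $\gamma$ samples equals $\mathcal{B}$ is at least $\min\{1/2+4\delta,\ 1/2+1/100\}$.
   Context: The "bias towards the correct opinion" of a population being at least $\delta$ means that the fraction of its members holding the correct opinion $\mathcal{B}$ is at least $1/2+\delta$. *)

theory Defs
  imports "HOL-Probability.Product_PMF"
begin

definition noisy_sample :: "'a set \<Rightarrow> ('a \<Rightarrow> bool) \<Rightarrow> real \<Rightarrow> bool pmf" where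
  "noisy_sample A opn eta =
     do { a \<leftarrow> pmf_of_set A; flip \<leftarrow> bernoulli_pmf eta; return_pmf (opn a \<noteq> flip) }"

definition noisy_samples :: "nat \<Rightarrow> 'a set \<Rightarrow> ('a \<Rightarrow> bool) \<Rightarrow> (nat \<Rightarrow> real) \<Rightarrow> (nat \<Rightarrow> bool) pmf" where
  "noisy_samples gamma A opn eta = Pi_pmf {..<gamma} False (\<lambda>i. noisy_sample A opn (eta i))"

definition majority_is :: "nat \<Rightarrow> bool \<Rightarrow> (nat \<Rightarrow> bool) \<Rightarrow> bool" where
  "majority_is gamma b f \<longleftrightarrow> 2 * card {i \<in> {..<gamma}. f i = b} > gamma"

end

theory Submission
  imports Defs
begin

lemma prob_bind_pmf:
  "measure_pmf.prob (bind_pmf M F) S = (\<integral>x. measure_pmf.prob (F x) S \<partial>M)"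
  unfolding measure_pmf_bind
  by (rule measure_pmf.measure_bind[where N="count_space UNIV"]) (auto intro!: measurable_pmf_measure2 simp: space_subprob_algebra prob_space_imp_subprob_space measure_pmf.prob_space_axioms)

lemma prob_bind_bern:
  assumes "0 \<le> e" "e \<le> 1"
  shows "measure_pmf.prob (bind_pmf (bernoulli_pmf e) F) S = e * measure_pmf.prob (F True) S + (1-e) * measure_pmf.prob (F False) S"
  using assms by (simp add: prob_bind_pmf mult.commute)

definition stepc :: "real \<Rightarrow> nat pmf \<Rightarrow> nat pmf" where
  "stepc e M = bind_pmf (bernoulli_pmf e) (\<lambda>b. map_pmf (\<lambda>c. (if b then 1 else 0) + c) M)"

lemma prob_stepc:
  assumes "0 \<le> e" "e \<le> 1"
  shows "measure_pmf.prob (stepc e M) {..k} = e * (if k = 0 then 0 else measure_pmf.prob M {..k-1}) + (1-e) * measure_pmf.prob M {..k}"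
proof -
  have 1: "(\<lambda>c::nat. (if True then 1 else 0) + c) -` {..k} = (if k = 0 then {} else {..k-1})" by auto
  have 2: "(\<lambda>c::nat. (if False then 1 else 0) + c) -` {..k} = {..k}" by auto
  show ?thesis unfolding stepc_def prob_bind_bern[OF assms] measure_map_pmf 1 2
    by simp
qed

lemma dom_step:
  assumes "0 \<le> e" "e \<le> e'" "e' \<le> 1"
    and dom: "\<And>k. measure_pmf.prob M {..k} \<ge> measure_pmf.prob M' {..k}"
  shows "measure_pmf.prob (stepc e M) {..k} \<ge> measure_pmf.prob (stepc e' M') {..k}"
proof -
  define a where "a = (if k = 0 then 0 else measure_pmf.prob M {..k-1})"
  define a' where "a' = (if k = 0 then 0 else measure_pmf.prob M' {..k-1})"
  define c where "c = measure_pmf.prob M {..k}"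
  define c' where "c' = measure_pmf.prob M' {..k}"
  have "a \<le> c" unfolding a_def c_def
    by (auto intro!: measure_pmf.finite_measure_mono)
  have "a' \<le> a" unfolding a_def a'_def using dom by auto
  have "c' \<le> c" unfolding c_def c'_def using dom by auto
  have "e' * a' + (1-e') * c' \<le> e' * a + (1-e') * c"
    using \<open>a' \<le> a\<close> \<open>c' \<le> c\<close> assms by (intro add_mono mult_left_mono) auto
  also have "\<dots> \<le> e * a + (1-e) * c"
  proof -
    have "(e'-e)*(c-a) \<ge> 0" using \<open>a \<le> c\<close> assms by simp
    thus ?thesis by (simp add: algebra_simps)
  qed
  finally show ?thesis
    using assms by (simp add: prob_stepc a_def a'_def c_def c'_def)
qed

lemma binomial_stepc:
  assumes "0 \<le> p" "p \<le> 1"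
  shows "binomial_pmf (Suc n) p = stepc p (binomial_pmf n p)"
  using assms by (simp add: binomial_pmf_Suc stepc_def map_pmf_def)

definition cntd :: "nat set \<Rightarrow> bool \<Rightarrow> (nat \<Rightarrow> bool pmf) \<Rightarrow> nat pmf" where
  "cntd I B D = map_pmf (\<lambda>f. card {i\<in>I. f i \<noteq> B}) (Pi_pmf I False D)"

definition cnt :: "nat set \<Rightarrow> bool \<Rightarrow> (nat \<Rightarrow> bool) \<Rightarrow> nat" where
  "cnt I B f = card {i\<in>I. f i \<noteq> B}"

lemma cntd_insert:
  assumes "finite I" "x \<notin> I" "map_pmf (\<lambda>v. v \<noteq> B) (D x) = bernoulli_pmf e"
  shows "cntd (insert x I) B D = stepc e (cntd I B D)"
proof -
  have card: "cnt (insert x I) B (f(x:=y)) = (if y \<noteq> B then 1 else 0) + cnt I B f"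
    for f :: "nat \<Rightarrow> bool" and y
  proof -
    have "{i\<in>insert x I. (f(x:=y)) i \<noteq> B} = (if y \<noteq> B then insert x {i\<in>I. f i \<noteq> B} else {i\<in>I. f i \<noteq> B})"
      using assms(2) by auto
    thus ?thesis using assms(1,2) by (simp add: cnt_def)
  qed
  have "cntd (insert x I) B D = map_pmf (cnt (insert x I) B) (Pi_pmf (insert x I) False D)"
    unfolding cntd_def cnt_def[abs_def] by (rule refl)
  also have "\<dots> = bind_pmf (D x) (\<lambda>y. map_pmf (\<lambda>c. (if y \<noteq> B then 1 else 0) + c) (map_pmf (cnt I B) (Pi_pmf I False D)))"
    unfolding Pi_pmf_insert'[OF assms(1,2)]
    by (simp add: map_bind_pmf card map_pmf_def bind_assoc_pmf bind_return_pmf)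
  also have "\<dots> = stepc e (cntd I B D)"
    unfolding stepc_def assms(3)[symmetric] bind_map_pmf by (simp add: cntd_def cnt_def[abs_def])
  finally show ?thesis .
qed

lemma cntd_dom:
  assumes "finite I" "\<forall>i\<in>I. map_pmf (\<lambda>v. v \<noteq> B) (D i) = bernoulli_pmf (e i) \<and> 0 \<le> e i \<and> e i \<le> e0"
    "0 \<le> e0" "e0 \<le> 1"
  shows "measure_pmf.prob (cntd I B D) {..k} \<ge> measure_pmf.prob (binomial_pmf (card I) e0) {..k}"
  using assms
proof (induction I arbitrary: k rule: finite_induct)
  case empty
  have "cntd {} B D = return_pmf 0" by (simp add: cntd_def)
  then show ?case using empty by (simp add: binomial_pmf_0)
next
  case (insert x F)
  have "measure_pmf.prob (binomial_pmf (card (insert x F)) e0) {..k}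
      = measure_pmf.prob (stepc e0 (binomial_pmf (card F) e0)) {..k}"
    using insert by (simp add: binomial_stepc)
  also have "\<dots> \<le> measure_pmf.prob (stepc (e x) (cntd F B D)) {..k}"
    using insert by (intro dom_step) auto
  also have "\<dots> = measure_pmf.prob (cntd (insert x F) B D) {..k}"
    using insert by (subst cntd_insert[where e="e x"]) auto
  finally show ?case .
qed

lemma noisy_marginal:
  assumes "finite A" "A \<noteq> {}" "0 \<le> eta" "eta \<le> 1"
  shows "map_pmf (\<lambda>v. v \<noteq> B) (noisy_sample A opn eta) =
    bernoulli_pmf ((real (card {a\<in>A. opn a = B}) * eta + real (card {a\<in>A. opn a \<noteq> B}) * (1 - eta)) / real (card A))"
    (is "_ = bernoulli_pmf ?e")
proof -
  have M: "map_pmf (\<lambda>v. v \<noteq> B) (noisy_sample A opn eta) =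
     bind_pmf (pmf_of_set A) (\<lambda>a. bernoulli_pmf (if opn a = B then eta else 1 - eta))"
    unfolding noisy_sample_def map_bind_pmf
  proof (intro bind_pmf_cong refl)
    fix a
    show "bernoulli_pmf eta \<bind> (\<lambda>flip. map_pmf (\<lambda>v. v \<noteq> B) (return_pmf (opn a \<noteq> flip))) =
         bernoulli_pmf (if opn a = B then eta else 1 - eta)"
    proof (cases "opn a = B")
      case True
      have eq: "\<And>flip. ((B = (\<not> flip)) = (\<not> B)) = flip" by auto
      then show ?thesis using True by (simp add: map_return_pmf bind_return_pmf' eq)
    next
      case False
      have "bernoulli_pmf eta \<bind> (\<lambda>flip. return_pmf (\<not> flip)) = map_pmf Not (bernoulli_pmf eta)"
        by (simp add: map_pmf_def)
      also have "\<dots> = bernoulli_pmf (1 - eta)"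
      proof (rule pmf_eqI)
        fix i
        have "pmf (map_pmf Not (bernoulli_pmf eta)) (Not (Not i)) = pmf (bernoulli_pmf eta) (Not i)"
          by (rule pmf_map_inj') (auto simp: inj_def)
        then show "pmf (map_pmf Not (bernoulli_pmf eta)) i = pmf (bernoulli_pmf (1 - eta)) i"
          using assms by (cases i) auto
      qed
      finally have X: "bernoulli_pmf eta \<bind> (\<lambda>flip. return_pmf (\<not> flip)) = bernoulli_pmf (1 - eta)" .
      have eq: "\<And>flip. ((B = flip) = (\<not> B)) = (\<not> flip)" by auto
      show ?thesis using X using False by (simp add: map_return_pmf eq)
    qed
  qed
  have S: "(\<Sum>a\<in>A. (if opn a = B then eta else 1 - eta)) = real (card {a\<in>A. opn a = B}) * eta + real (card {a\<in>A. opn a \<noteq> B}) * (1 - eta)"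
    using assms(1) by (simp add: sum.If_cases Int_def)
  have Sf: "(\<Sum>a\<in>A. (if opn a = B then 1 - eta else eta)) = real (card {a\<in>A. opn a = B}) * (1-eta) + real (card {a\<in>A. opn a \<noteq> B}) * eta"
    using assms(1) by (simp add: sum.If_cases Int_def)
  have cA: "real (card A) = real (card {a\<in>A. opn a = B}) + real (card {a\<in>A. opn a \<noteq> B})"
  proof -
    have "card ({a\<in>A. opn a = B} \<union> {a\<in>A. opn a \<noteq> B}) = card {a\<in>A. opn a = B} + card {a\<in>A. opn a \<noteq> B}"
      by (rule card_Un_disjoint) (use assms(1) in auto)
    moreover have "{a\<in>A. opn a = B} \<union> {a\<in>A. opn a \<noteq> B} = A" by auto
    ultimately show ?thesis by (metis of_nat_add)
  qed
  have pos: "real (card A) > 0" using assms by auto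
  have e0: "0 \<le> ?e" using assms by (intro divide_nonneg_nonneg add_nonneg_nonneg mult_nonneg_nonneg) auto
  define nB where "nB = real (card {a\<in>A. opn a = B})"
  define nN where "nN = real (card {a\<in>A. opn a \<noteq> B})"
  have "nB * eta \<le> nB" "nN * (1 - eta) \<le> nN" using assms unfolding nB_def nN_def
    by (simp_all add: mult_left_le)
  hence e1: "?e \<le> 1" using pos cA unfolding nB_def[symmetric] nN_def[symmetric]
    by (simp add: divide_le_eq_1)
  have pT: "\<And>a. pmf (bernoulli_pmf (if opn a = B then eta else 1-eta)) True = (if opn a = B then eta else 1-eta)"
    using assms by auto
  have pF: "\<And>a. pmf (bernoulli_pmf (if opn a = B then eta else 1-eta)) False = (if opn a = B then 1-eta else eta)"
    using assms by auto
  show ?thesis unfolding M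
  proof (rule pmf_eqI)
    fix b :: bool
    show "pmf (pmf_of_set A \<bind> (\<lambda>a. bernoulli_pmf (if opn a = B then eta else 1 - eta))) b = pmf (bernoulli_pmf ?e) b"
    proof (cases b)
      case True
      then show ?thesis by (simp only: True pmf_bind_pmf_of_set[OF assms(2,1)] pT S pmf_bernoulli_True[OF e0 e1])
    next
      case False
      have "(nB * (1-eta) + nN * eta) / real (card A) = 1 - ?e"
        using pos cA unfolding nB_def[symmetric] nN_def[symmetric] by (simp add: field_simps)
      then show ?thesis unfolding nB_def nN_def
        by (simp only: False pmf_bind_pmf_of_set[OF assms(2,1)] pF Sf pmf_bernoulli_False[OF e0 e1])
    qed
  qed
qed


definition FF :: "nat \<Rightarrow> nat \<Rightarrow> real \<Rightarrow> real" where
  "FF N s e = (\<Sum>i\<le>s. real (Suc N choose i) * e^i * (1-e)^(Suc N - i))"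

lemma FF_deriv:
  "s \<le> N \<Longrightarrow> (FF N s has_real_derivative - (real (Suc N) * real (N choose s) * e^s * (1-e)^(N-s))) (at e)"
proof (induction s)
  case 0
  have "((\<lambda>e. (1-e)^(Suc N)) has_real_derivative - (real (Suc N) * (1-e)^N)) (at e)"
  proof -
    have d: "((\<lambda>e. 1 - e) has_real_derivative -1) (at e)" by (auto intro!: derivative_eq_intros)
    show ?thesis using DERIV_power[OF d, of "Suc N"] by simp
  qed
  then show ?case by (simp add: FF_def[abs_def])
next
  case (Suc s)
  obtain m where m: "N - s = Suc m" using Suc.prems by (metis Suc_diff_le Suc_le_D diff_Suc_Suc)
  have m2: "Suc N - Suc s = Suc m" "N - Suc s = m" using m Suc.prems by auto
  define C where "C = real (Suc N choose Suc s)"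
  have T: "((\<lambda>e. C * e^Suc s * (1-e)^(Suc m)) has_real_derivative
      C * (real (Suc s) * e^s * (1-e)^Suc m - real (Suc m) * e^Suc s * (1-e)^m)) (at e)"
  proof -
    have d: "((\<lambda>e. 1 - e) has_real_derivative -1) (at e)" by (auto intro!: derivative_eq_intros)
    have d2: "((\<lambda>e. (1-e)^Suc m) has_real_derivative real (Suc m) * (-1) * (1-e)^m) (at e)"
    proof -
      have "Suc m - Suc 0 = m" by simp
      thus ?thesis using DERIV_power[OF d, of "Suc m"] by (simp only: mult.assoc)
    qed
    have d0: "((\<lambda>e. e) has_real_derivative 1) (at e)" by (rule DERIV_ident)
    have d1: "((\<lambda>e. e^Suc s) has_real_derivative real (Suc s) * 1 * e^s) (at e)"
    proof -
      have "Suc s - Suc 0 = s" by simp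
      thus ?thesis using DERIV_power[OF d0, of "Suc s"] by (simp only: mult.assoc)
    qed
    show ?thesis
      by (rule DERIV_cong[OF DERIV_mult[OF DERIV_cmult[OF d1, of C] d2]]) (simp add: algebra_simps)
  qed
  have IH: "(FF N s has_real_derivative - (real (Suc N) * real (N choose s) * e^s * (1-e)^(Suc m))) (at e)"
    using Suc.IH Suc.prems m by simp
  have id1: "real (Suc s) * C = real (Suc N) * real (N choose s)"
    unfolding C_def by (metis Suc_times_binomial_eq of_nat_mult mult.commute)
  have id2: "real (Suc m) * C = real (Suc N) * real (N choose Suc s)"
  proof -
    have "(Suc N - Suc s) * (Suc N choose Suc s) = Suc N * ((Suc N - 1) choose Suc s)"
      by (rule binomial_absorb_comp)
    thus ?thesis unfolding C_def using m2 by (metis diff_Suc_1 of_nat_mult)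
  qed
  have eq: "FF N (Suc s) = (\<lambda>e. FF N s e + C * e^Suc s * (1-e)^(Suc m))"
    by (simp add: FF_def[abs_def] C_def m2 m del: binomial_Suc_Suc)
  have "(FF N (Suc s) has_real_derivative
     - (real (Suc N) * real (N choose s) * e^s * (1-e)^(Suc m)) +
      C * (real (Suc s) * e^s * (1-e)^Suc m - real (Suc m) * e^Suc s * (1-e)^m)) (at e)"
    unfolding eq by (intro DERIV_add IH T)
  moreover have "- (real (Suc N) * real (N choose s) * e^s * (1-e)^(Suc m)) +
      C * (real (Suc s) * e^s * (1-e)^Suc m - real (Suc m) * e^Suc s * (1-e)^m)
     = - (real (Suc N) * real (N choose Suc s) * e^Suc s * (1-e)^m)"
  proof -
    have "C * (real (Suc s) * e^s * (1-e)^Suc m) = (real (Suc s) * C) * e^s * (1-e)^Suc m" by simp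
    moreover have "C * (real (Suc m) * e^Suc s * (1-e)^m) = (real (Suc m) * C) * e^Suc s * (1-e)^m" by simp
    ultimately show ?thesis unfolding id1 id2 by (simp add: algebra_simps)
  qed
  ultimately show ?case using m2 by simp
qed

lemma FF_half: "FF (2*r) r (1/2) = 1/2"
proof -
  have "FF (2*r) r (1/2) = (\<Sum>i\<le>r. real (2*r+1 choose i) * (1/2)^(2*r+1))"
    unfolding FF_def
  proof (intro sum.cong refl)
    fix i assume "i \<in> {..r}"
    hence "i + (Suc (2*r) - i) = Suc (2*r)" by simp
    hence "(1/2::real)^i * (1/2)^(Suc (2*r) - i) = (1/2)^(2*r+1)" by (metis power_add Suc_eq_plus1)
    thus "real (Suc (2 * r) choose i) * (1 / 2) ^ i * (1 - 1 / 2) ^ (Suc (2 * r) - i) =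
         real (2 * r + 1 choose i) * (1 / 2) ^ (2 * r + 1)" by (simp add: mult.assoc)
  qed
  also have "\<dots> = real (\<Sum>i\<le>r. (2*r+1 choose i)) * (1/2)^(2*r+1)"
    by (simp add: sum_distrib_right)
  also have "\<dots> = 1/2" unfolding binomial_r_part_sum by (simp add: power_mult field_simps)
  finally show ?thesis .
qed

lemma central_sq: "r \<ge> 1 \<Longrightarrow> 4 * real r * real ((2*r) choose r)^2 \<ge> 16^r"
proof (induction r rule: nat_induct_at_least)
  case base
  then show ?case by (simp add: numeral_2_eq_2)
next
  case (Suc r)
  define c where "c = real ((2*r) choose r)"
  define c' where "c' = real ((2*Suc r) choose Suc r)"
  have a: "(r+1) * (2*r+1 choose r) = (2*r+1) * (2*r choose r)"
    using binomial_absorb_comp[of "2*r+1" r] by simp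
  have b: "(2*r+2) * (2*r+1 choose r) = (2*r+2 choose (r+1)) * (r+1)"
    using Suc_times_binomial_eq[of "2*r+1" r] by simp
  define X where "X = (2*r+1 choose r)"
  define Y where "Y = (2*r+2 choose (r+1))"
  have b': "(2*r+2) * X = Y * (r+1)" using b unfolding X_def Y_def .
  have "(r+1) * (2 * X) = (r+1) * Y"
    using b' by (simp add: algebra_simps)
  hence "2 * X = Y" using mult_left_cancel[of "r+1" "2*X" Y] by simp
  hence b2: "(2*r+2 choose (r+1)) = 2 * (2*r+1 choose r)" unfolding X_def Y_def by simp
  have "(r+1) * (2*r+2 choose (r+1)) = 2 * ((2*r+1) * (2*r choose r))"
    unfolding b2 a[symmetric] by simp
  hence "real ((r+1) * (2*r+2 choose (r+1))) = real (2 * ((2*r+1) * (2*r choose r)))" by (rule arg_cong)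
  moreover have "2 * Suc r = 2*r+2" by simp
  ultimately have key: "real (r+1) * c' = 2 * real (2*r+1) * c"
    unfolding c_def c'_def by (simp only: of_nat_mult of_nat_numeral mult.assoc Suc_eq_plus1)
  have IH: "4 * real r * c^2 \<ge> 16^r" using Suc c_def by simp
  have "real (r+1) * (4 * real (r+1) * c'^2) = 4 * (real (r+1) * c')^2" by (simp add: power2_eq_square)
  also have "\<dots> = 16 * (real (2*r+1))^2 * c^2" unfolding key by (simp add: power2_eq_square algebra_simps)
  also have "\<dots> \<ge> 16 * (real (r+1) * (4 * real r)) * c^2"
    by (intro mult_right_mono mult_left_mono) (auto simp: power2_eq_square algebra_simps)
  finally have "real (r+1) * (4 * real (r+1) * c'^2) \<ge> real (r+1) * (16 * (4 * real r * c^2))"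
    by (simp add: algebra_simps)
  hence "4 * real (r+1) * c'^2 \<ge> 16 * (4 * real r * c^2)"
    by (rule mult_left_le_imp_le) simp
  moreover have "16 * (4 * real r * c^2) \<ge> 16 * 16^r" using IH by simp
  ultimately show ?case unfolding c'_def by simp
qed

lemma central_sqrt:
  assumes "r \<ge> 1"
  shows "real ((2*r) choose r) * (1/4)^r \<ge> 1 / (2 * sqrt r)"
proof -
  define c where "c = real ((2*r) choose r) * (1/4)^r"
  have r0: "real r > 0" using assms by simp
  have "4 * real r * real ((2*r) choose r)^2 \<ge> 16^r" by (rule central_sq[OF assms])
  hence "4 * real r * real ((2*r) choose r)^2 * ((1/4)^r)^2 \<ge> 16^r * ((1/4)^r)^2"
    by (intro mult_right_mono) auto
  moreover have "(16::real)^r * ((1/4)^r)^2 = 1"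
    by (simp add: power_mult_distrib[symmetric] power_mult[symmetric] power2_eq_square power_divide)
  ultimately have "4 * real r * c^2 \<ge> 1" unfolding c_def by (simp add: power_mult_distrib mult.assoc)
  hence "c^2 \<ge> (1 / (2 * sqrt r))^2" using r0 by (simp add: power_divide field_simps)
  moreover have "c \<ge> 0" unfolding c_def by simp
  ultimately show ?thesis unfolding c_def[symmetric] by (rule power2_le_imp_le)
qed

lemma gain_bound:
  fixes r :: nat and b :: real
  assumes r1: "r \<ge> 1" and b0: "0 < b" and bs: "b \<le> 1 / (4 * sqrt r)"
  shows "FF (2*r) r (1/2 - b) \<ge> 1/2 + 3/4 * b * sqrt r"
proof -
  define C where "C = real ((2*r) choose r)"
  define s where "s = sqrt (real r)"
  have s1: "s \<ge> 1" unfolding s_def using r1 by simp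
  have ss: "s * s = real r" unfolding s_def by simp
  have b4s: "b * (4 * s) \<le> 1" using bs s1 unfolding s_def[symmetric] by (simp add: field_simps)
  have "b * 4 \<le> b * (4 * s)" using b0 s1 by (intro mult_left_mono) auto
  hence b4: "b \<le> 1/4" using b4s by simp
  have "\<exists>z. 1/2 - b < z \<and> z < 1/2 \<and> FF (2*r) r (1/2) - FF (2*r) r (1/2 - b) =
     (1/2 - (1/2 - b)) * (- (real (Suc (2*r)) * real ((2*r) choose r) * z^r * (1-z)^(2*r-r)))"
    using b0 by (intro MVT2 FF_deriv) auto
  then obtain z where z: "1/2 - b < z" "z < 1/2" and
    mvt: "FF (2*r) r (1/2) - FF (2*r) r (1/2 - b) = b * (- (real (Suc (2*r)) * C * z^r * (1-z)^r))"
    unfolding C_def by auto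
  have F: "FF (2*r) r (1/2 - b) = 1/2 + b * (real (2*r+1) * C * (z * (1-z))^r)"
  proof -
    have "(z * (1-z))^r = z^r * (1-z)^r" by (rule power_mult_distrib)
    moreover have "FF (2*r) r (1/2) = 1/2" by (rule FF_half)
    ultimately show ?thesis using mvt by (simp add: algebra_simps)
  qed
  have zz: "z * (1-z) \<ge> 1/4 - b^2"
  proof -
    have "z * (1-z) - (1/4 - b^2) = (z - (1/2 - b)) * (1/2 + b - z)" by (simp add: algebra_simps power2_eq_square add_divide_distrib)
    moreover have "(z - (1/2 - b)) * (1/2 + b - z) \<ge> 0" using z b0 by (intro mult_nonneg_nonneg) auto
    ultimately show ?thesis by simp
  qed
  have "b * b \<le> b * (1/4)" using b4 b0 by (intro mult_left_mono) auto
  hence q0: "0 \<le> 1/4 - b^2" using b4 b0 unfolding power2_eq_square by linarith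
  have "(z * (1-z))^r \<ge> (1/4 - b^2)^r" by (rule power_mono[OF zz q0])
  moreover have "(1/4 - b^2)^r = (1/4)^r * (1 + (- 4 * b^2))^r"
    by (simp add: power_mult_distrib[symmetric] algebra_simps)
  moreover have "(1 + (- 4 * b^2))^r \<ge> 1 + real r * (- 4 * b^2)"
    by (rule Bernoulli_inequality) (use q0 in simp)
  ultimately have P0: "(z * (1-z))^r \<ge> (1/4)^r * (1 + (- 4 * b^2))^r"
    and P1: "(1/4::real)^r * (1 + (- 4 * b^2))^r \<ge> (1/4)^r * (1 + real r * (- 4 * b^2))"
    by (auto intro!: mult_left_mono)
  have P: "(z * (1-z))^r \<ge> (1/4)^r * (1 + real r * (- 4 * b^2))"
    by (rule order_trans[OF P1 P0])
  have rb: "4 * real r * b^2 \<le> 1/4"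
  proof -
    have "b * (4 * s) \<le> 1" using bs s1 unfolding s_def[symmetric] by (simp add: field_simps)
    hence "(b * (4 * s))^2 \<le> 1" using b0 s1 by (simp add: power_le_one)
    moreover have "(b * (4 * s))^2 = 16 * (b * b) * (s * s)" by (simp add: power2_eq_square algebra_simps)
    ultimately have "16 * (b * b) * real r \<le> 1" unfolding ss by simp
    moreover have "4 * real r * (b * b) = (16 * (b * b) * real r) / 4" by simp
    ultimately show ?thesis unfolding power2_eq_square by linarith
  qed
  have cs: "C * (1/4)^r \<ge> 1 / (2 * s)" unfolding C_def s_def by (rule central_sqrt[OF r1])
  have "real (2*r+1) * (1 / (2 * s)) \<ge> s"
  proof -
    have "real (2*r+1) \<ge> 2 * (s * s)" unfolding ss by simp
    thus ?thesis using s1 by (simp add: field_simps)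
  qed
  hence A: "real (2*r+1) * (C * (1/4)^r) \<ge> s"
    using cs by (smt (verit) mult_left_mono of_nat_0_le_iff)
  have w: "1 + real r * (- 4 * b^2) \<ge> 3/4" using rb by simp
  have "s * (3/4) \<le> (real (2*r+1) * (C * (1/4)^r)) * (1 + real r * (- 4 * b^2))"
    using A w s1 by (intro mult_mono) auto
  also have "\<dots> = real (2*r+1) * C * ((1/4)^r * (1 + real r * (- 4 * b^2)))" by simp
  also have "\<dots> \<le> real (2*r+1) * C * (z * (1-z))^r"
    using P unfolding C_def by (intro mult_left_mono) auto
  finally have "real (2*r+1) * C * (z * (1-z))^r \<ge> s * (3/4)" .
  hence "b * (real (2*r+1) * C * (z * (1-z))^r) \<ge> b * (s * (3/4))"
    using b0 by (intro mult_left_mono) auto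
  thus ?thesis unfolding F s_def by (simp add: algebra_simps)
qed

lemma card_split:
  assumes "finite I"
  shows "card {i\<in>I. P i} + card {i\<in>I. \<not> P i} = card I"
proof -
  have "card ({i\<in>I. P i} \<union> {i\<in>I. \<not> P i}) = card {i\<in>I. P i} + card {i\<in>I. \<not> P i}"
    by (rule card_Un_disjoint) (use assms in auto)
  moreover have "{i\<in>I. P i} \<union> {i\<in>I. \<not> P i} = I" by auto
  ultimately show ?thesis by simp
qed

lemma prob_binomial_FF:
  assumes "0 \<le> e" "e \<le> 1"
  shows "measure_pmf.prob (binomial_pmf (Suc N) e) {..s} = FF N s e"
  using assms by (simp add: measure_measure_pmf_finite FF_def)

theorem mainTheorem4:
  fixes \<epsilon> \<delta> :: real and r \<gamma> :: nat and A :: "'a set" and opn :: "'a \<Rightarrow> bool"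
    and B :: bool and eta :: "nat \<Rightarrow> real"
  assumes "0 < \<epsilon>" and "\<epsilon> \<le> 1/2"
    and "r = nat \<lceil>2^22 / \<epsilon>^2\<rceil>" and "\<gamma> = 2 * r + 1"
    and "\<delta> \<ge> 0"
    and "finite A" and "A \<noteq> {}"
    and "real (card {a \<in> A. opn a = B}) / real (card A) \<ge> 1/2 + \<delta>"
    and "\<And>i. i < \<gamma> \<Longrightarrow> 0 \<le> eta i \<and> eta i \<le> 1/2 - \<epsilon>"
  shows "measure_pmf.prob (noisy_samples \<gamma> A opn eta) {f. majority_is \<gamma> B f}
           \<ge> min (1/2 + 4 * \<delta>) (1/2 + 1/100)"
proof -
  note eps0 = assms(1) and eps1 = assms(2) and rdef = assms(3) and gdef = assms(4)
    and d0 = assms(5) and finA = assms(6) and neA = assms(7) and frac = assms(8) and etab = assms(9)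
  define D where "D = (\<lambda>i. noisy_sample A opn (eta i))"
  define cA where "cA = real (card A)"
  define nB where "nB = real (card {a\<in>A. opn a = B})"
  define nN where "nN = real (card {a\<in>A. opn a \<noteq> B})"
  have cA0: "cA > 0" unfolding cA_def using finA neA by (simp add: card_gt_0_iff)
  have cAs: "cA = nB + nN" unfolding cA_def nB_def nN_def
    using card_split[OF finA, of "\<lambda>a. opn a = B"] by (metis of_nat_add)
  define x where "x = nB / cA"
  have x1: "x \<le> 1" unfolding x_def using cAs cA0 by (simp add: nN_def)
  have xd: "x \<ge> 1/2 + \<delta>" using frac unfolding x_def nB_def cA_def .
  have nNx: "nN / cA = 1 - x" unfolding x_def using cAs cA0 by (simp add: field_simps)
  have "\<epsilon> * \<epsilon> \<le> \<epsilon> * (1/2)" using eps0 eps1 by (intro mult_left_mono) auto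
  hence e2: "\<epsilon>^2 \<le> 1/4" using eps1 unfolding power2_eq_square by linarith
  have rr: "real r \<ge> 2^22 / \<epsilon>^2" unfolding rdef by linarith
  have "2^22 / \<epsilon>^2 \<ge> (1::real)" using e2 eps0 by (simp add: field_simps)
  hence r1: "r \<ge> 1" using rr by linarith
  have sr: "sqrt (real r) \<ge> 2^11 / \<epsilon>"
  proof -
    have h: "sqrt (2^22 / \<epsilon>^2) \<le> sqrt (real r)" by (rule real_sqrt_le_mono[OF rr])
    have eq: "sqrt (2^22 / \<epsilon>^2) = 2^11 / \<epsilon>"
    proof -
      have "(2^22 / \<epsilon>^2) = (2^11 / \<epsilon>)^2" by (simp add: power_divide)
      thus ?thesis using eps0 by simp
    qed
    show ?thesis using h unfolding eq .
  qed
  have sr0: "sqrt (real r) \<ge> 1" using r1 by simp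
  define \<beta> where "\<beta> = min (2 * \<epsilon> * \<delta>) (1 / (4 * sqrt (real r)))"
  define e0 where "e0 = 1/2 - \<beta>"
  have b0: "\<beta> \<ge> 0" unfolding \<beta>_def using eps0 d0 by simp
  have "1 / (4 * sqrt (real r)) \<le> 1/4" using sr0 by (simp add: field_simps)
  hence b4: "\<beta> \<le> 1/4" unfolding \<beta>_def by linarith
  have e00: "0 \<le> e0" "e0 \<le> 1" unfolding e0_def using b0 b4 by auto
  define e where "e = (\<lambda>i. (nB * eta i + nN * (1 - eta i)) / cA)"
  have marg: "\<forall>i\<in>{..<\<gamma>}. map_pmf (\<lambda>v. v \<noteq> B) (D i) = bernoulli_pmf (e i) \<and> 0 \<le> e i \<and> e i \<le> e0"
  proof
    fix i assume "i \<in> {..<\<gamma>}"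
    hence et: "0 \<le> eta i" "eta i \<le> 1/2 - \<epsilon>" using etab by auto
    have M: "map_pmf (\<lambda>v. v \<noteq> B) (D i) = bernoulli_pmf (e i)"
      unfolding D_def e_def nB_def nN_def cA_def using finA neA et eps0 by (intro noisy_marginal) auto
    have ei: "e i = 1/2 - (x - 1/2) * (1 - 2 * eta i)"
    proof -
      have "e i = (nB / cA) * eta i + (nN / cA) * (1 - eta i)" unfolding e_def by (simp add: add_divide_distrib)
      also have "\<dots> = x * eta i + (1 - x) * (1 - eta i)" unfolding nNx x_def ..
      finally show ?thesis by (simp add: algebra_simps)
    qed
    have "(x - 1/2) * (1 - 2 * eta i) \<ge> \<delta> * (2 * \<epsilon>)"
      using xd et d0 eps0 by (intro mult_mono) auto
    moreover have "\<beta> \<le> \<delta> * (2 * \<epsilon>)" unfolding \<beta>_def by (simp add: mult.commute mult.left_commute)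
    moreover have "(x - 1/2) * (1 - 2 * eta i) \<le> 1/2"
    proof -
      have "(x - 1/2) * (1 - 2 * eta i) \<le> (1/2) * 1"
        using x1 xd d0 et eps0 eps1 by (intro mult_mono) auto
      thus ?thesis by simp
    qed
    ultimately show "map_pmf (\<lambda>v. v \<noteq> B) (D i) = bernoulli_pmf (e i) \<and> 0 \<le> e i \<and> e i \<le> e0"
      using M ei unfolding e0_def by auto
  qed
  have dom: "measure_pmf.prob (cntd {..<\<gamma>} B D) {..r} \<ge> measure_pmf.prob (binomial_pmf (card {..<\<gamma>}) e0) {..r}"
    by (rule cntd_dom[OF _ marg e00]) simp
  have bin: "measure_pmf.prob (binomial_pmf (card {..<\<gamma>}) e0) {..r} = FF (2*r) r e0"
    using prob_binomial_FF[OF e00, of "2*r" r] gdef by simp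
  have ev: "measure_pmf.prob (noisy_samples \<gamma> A opn eta) {f. majority_is \<gamma> B f} = measure_pmf.prob (cntd {..<\<gamma>} B D) {..r}"
  proof -
    have "{f. majority_is \<gamma> B f} = (\<lambda>f. card {i\<in>{..<\<gamma>}. f i \<noteq> B}) -` {..r}"
    proof (intro set_eqI)
      fix f :: "nat \<Rightarrow> bool"
      have "card {i\<in>{..<\<gamma>}. f i = B} + card {i\<in>{..<\<gamma>}. f i \<noteq> B} = \<gamma>"
        using card_split[of "{..<\<gamma>}" "\<lambda>i. f i = B"] by simp
      thus "f \<in> {f. majority_is \<gamma> B f} \<longleftrightarrow> f \<in> (\<lambda>f. card {i\<in>{..<\<gamma>}. f i \<noteq> B}) -` {..r}"
        unfolding majority_is_def gdef by auto
    qed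
    thus ?thesis unfolding cntd_def measure_map_pmf noisy_samples_def D_def by simp
  qed
  have main: "measure_pmf.prob (noisy_samples \<gamma> A opn eta) {f. majority_is \<gamma> B f} \<ge> FF (2*r) r e0"
    using dom bin ev by simp
  show ?thesis
  proof (cases "\<beta> = 0")
    case True
    hence "\<delta> = 0" unfolding \<beta>_def using eps0 d0 sr0 by (auto simp: min_def split: if_splits)
    moreover have "FF (2*r) r e0 = 1/2" unfolding e0_def True using FF_half by simp
    ultimately show ?thesis using main by simp
  next
    case False
    hence bp: "\<beta> > 0" using b0 by simp
    have bs: "\<beta> \<le> 1 / (4 * sqrt (real r))" unfolding \<beta>_def by simp
    have G: "FF (2*r) r e0 \<ge> 1/2 + 3/4 * \<beta> * sqrt (real r)"
      unfolding e0_def by (rule gain_bound[OF r1 bp bs])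
    show ?thesis
    proof (cases "2 * \<epsilon> * \<delta> \<le> 1 / (4 * sqrt (real r))")
      case True
      hence bd: "\<beta> = 2 * \<epsilon> * \<delta>" unfolding \<beta>_def by simp
      have "3/4 * \<beta> * sqrt (real r) \<ge> 3/4 * (2 * \<epsilon> * \<delta>) * (2^11 / \<epsilon>)"
        unfolding bd using sr eps0 d0 by (intro mult_left_mono) auto
      also have "3/4 * (2 * \<epsilon> * \<delta>) * (2^11 / \<epsilon>) = 3072 * \<delta>" using eps0 by (simp add: field_simps)
      finally have "3/4 * \<beta> * sqrt (real r) \<ge> 4 * \<delta>" using d0 by linarith
      thus ?thesis using G main by linarith
    next
      case False
      hence bd: "\<beta> = 1 / (4 * sqrt (real r))" unfolding \<beta>_def by simp
      have "3/4 * \<beta> * sqrt (real r) = 3/16" unfolding bd using sr0 by (simp add: field_simps)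
      thus ?thesis using G main by linarith
    qed
  qed
qed

end
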